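(* Let $q=(V_q,E_q,L_q)$ and $H=(V_H,E_H,L_H)$ be hypergraphs, fix an injection $pos:E_q\to\{0,1,\dots,|E_q|-1\}$, let $E'\subseteq E_q$, let $M:E'\to E_H$ be a partial embedding of the partial query $q'$ with hyperedge set $E'$, let $e\in E_q\setminus E'$ and $f\in E_H$, and put $M'=M\cup\{(e,f)\}$ (a map $E'\cup\{e\}\to E_H$). Suppose that for every integer $b$ whose binary representation has bit $pos(e)$ equal to $1$ and every label $l\in\Sigma$, $\mathcal{I}_q^{M'}(b,l)=\mathcal{I}_H^{M'}(b,l)$. Then $f$ is $M$-compatible for $e$, i.e., $M'$ is a partial embedding of the partial query with hyperedge set $E'\cup\{e\}$.
   Context: A (vertex-labeled) hypergraph is a triple $H=(V,E,L)$ where $V$ is a finite set, $E$ is a set of non-empty subsets of $V$ (hyperedges, no repeated hyperedges) with $\bigcup_{e\in E}e=V$, and $L:V\to\Sigma$ assigns each vertex a label. For $E'\subseteq E_q$ the partial query is $q'=(\bigcup_{e\in E'}e,E',L_q)$; a map $M:E'\to E_H$ is a partial embedding if there exists an injective label-preserving $\phi:\bigcup_{e\in E'}e\to V_H$ with $\{\phi(u):u\in e\}=M(e)$ for all $e\in E'$. For $F=E'\cup\{e\}$ and $M'$ as in the claim, the incident hyperedge bitmaps are $b_q^{M'}(u)=\sum_{g\in F,\,u\in g}2^{pos(g)}$ for $u\in\bigcup_{g\in F}g$, and $b_H^{M'}(v)=\sum_{g\in F,\,v\in M'(g)}2^{pos(g)}$ for $v\in\bigcup_{g\in F}M'(g)$.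 The cell signatures are $\mathcal{I}_q^{M'}(b,l)=|\{u\in\bigcup_{g\in F}g : b_q^{M'}(u)=b,\ L_q(u)=l\}|$ and $\mathcal{I}_H^{M'}(b,l)=|\{v\in\bigcup_{g\in F}M'(g) : b_H^{M'}(v)=b,\ L_H(v)=l\}|$. A data hyperedge $f$ is $M$-compatible for an unmapped query hyperedge $e$ if $M\cup\{(e,f)\}$ is a partial embedding for the partial query with hyperedge set $E'\cup\{e\}$. *)

theory Defs
  imports Main
begin

text \<open>Labels are given by a total
  function L into the label type (the alphabet Sigma).\<close>
definition hypergraph :: "'v set \<Rightarrow> 'v set set \<Rightarrow> ('v \<Rightarrow> 'l) \<Rightarrow> bool" where
  "hypergraph V E L \<longleftrightarrow> finite V \<and> (\<forall>e\<in>E. e \<noteq> {}) \<and> \<Union>E = V"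

text \<open>M : E' -> E_H is a partial embedding of the partial query q' = (\<Union>E', E', Lq)
  into the data hypergraph with hyperedges EH and labels LH.\<close>
definition partial_embedding ::
  "'a set set \<Rightarrow> ('a \<Rightarrow> 'l) \<Rightarrow> 'b set set \<Rightarrow> ('b \<Rightarrow> 'l) \<Rightarrow> ('a set \<Rightarrow> 'b set) \<Rightarrow> bool" where
  "partial_embedding E' Lq EH LH M \<longleftrightarrow>
     (\<forall>g\<in>E'. M g \<in> EH) \<and>
     (\<exists>\<phi>. inj_on \<phi> (\<Union>E') \<and> (\<forall>u\<in>\<Union>E'. LH (\<phi> u) = Lq u) \<and> (\<forall>g\<in>E'. \<phi> ` g = M g))"

definition bitmap_q :: "('a set \<Rightarrow> nat) \<Rightarrow> 'a set set \<Rightarrow> 'a \<Rightarrow> nat" where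
  "bitmap_q pos F u = (\<Sum>g\<in>{g\<in>F. u \<in> g}. 2 ^ pos g)"

definition bitmap_H :: "('a set \<Rightarrow> nat) \<Rightarrow> 'a set set \<Rightarrow> ('a set \<Rightarrow> 'b set) \<Rightarrow> 'b \<Rightarrow> nat" where
  "bitmap_H pos F M' v = (\<Sum>g\<in>{g\<in>F. v \<in> M' g}. 2 ^ pos g)"

definition cell_q :: "('a set \<Rightarrow> nat) \<Rightarrow> 'a set set \<Rightarrow> ('a \<Rightarrow> 'l) \<Rightarrow> nat \<Rightarrow> 'l \<Rightarrow> nat" where
  "cell_q pos F Lq b l = card {u \<in> \<Union>F. bitmap_q pos F u = b \<and> Lq u = l}"

definition cell_H ::
  "('a set \<Rightarrow> nat) \<Rightarrow> 'a set set \<Rightarrow> ('a set \<Rightarrow> 'b set) \<Rightarrow> ('b \<Rightarrow> 'l) \<Rightarrow> nat \<Rightarrow> 'l \<Rightarrow> nat" where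
  "cell_H pos F M' LH b l = card {v \<in> \<Union>(M' ` F). bitmap_H pos F M' v = b \<and> LH v = l}"

end

theory Submission
  imports Defs "HOL-Library.Nat_Bijection"
begin

lemma enc_reindex:
  assumes "inj_on pos F" "S \<subseteq> F"
  shows "(\<Sum>g\<in>S. (2::nat) ^ pos g) = set_encode (pos ` S)"
  unfolding set_encode_def
  using sum.reindex[of pos S "\<lambda>n. (2::nat) ^ n"] inj_on_subset[OF assms] by simp

lemma enc_eq:
  assumes "inj_on pos F" "finite F" "S \<subseteq> F" "T \<subseteq> F"
  shows "(\<Sum>g\<in>S. (2::nat) ^ pos g) = (\<Sum>g\<in>T. 2 ^ pos g) \<longleftrightarrow> S = T"
proof -
  have fS: "finite S" "finite T" using assms finite_subset by auto
  have "(\<Sum>g\<in>S. (2::nat) ^ pos g) = (\<Sum>g\<in>T. 2 ^ pos g) \<longleftrightarrow> pos ` S = pos ` T"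
    using enc_reindex[OF assms(1,3)] enc_reindex[OF assms(1,4)] set_encode_eq fS by simp
  also have "\<dots> \<longleftrightarrow> S = T" using inj_on_image_eq_iff[OF assms(1,3,4)] .
  finally show ?thesis .
qed

lemma enc_bit:
  assumes "inj_on pos F" "finite F" "S \<subseteq> F" "x \<in> F"
  shows "bit (\<Sum>g\<in>S. (2::nat) ^ pos g) (pos x) \<longleftrightarrow> x \<in> S"
proof -
  have fS: "finite S" using assms finite_subset by auto
  have "bit (\<Sum>g\<in>S. (2::nat) ^ pos g) (pos x) \<longleftrightarrow> pos x \<in> set_decode (set_encode (pos ` S))"
    unfolding enc_reindex[OF assms(1,3)] set_decode_def by (simp add: bit_iff_odd)
  also have "\<dots> \<longleftrightarrow> pos x \<in> pos ` S" using fS by simp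
  also have "\<dots> \<longleftrightarrow> x \<in> S" using inj_on_image_mem_iff[OF assms(1,4,3)] .
  finally show ?thesis .
qed

lemma fiber_bij:
  assumes "finite U" "finite W" "\<And>k. card {u\<in>U. s u = k} = card {v\<in>W. t v = k}"
  shows "\<exists>\<psi>. bij_betw \<psi> U W \<and> (\<forall>u\<in>U. t (\<psi> u) = s u)"
proof -
  have "\<forall>k. \<exists>h. bij_betw h {u\<in>U. s u = k} {v\<in>W. t v = k}"
  proof
    fix k show "\<exists>h. bij_betw h {u\<in>U. s u = k} {v\<in>W. t v = k}"
      by (rule finite_same_card_bij) (use assms in auto)
  qed
  then obtain H where H: "\<And>k. bij_betw (H k) {u\<in>U. s u = k} {v\<in>W. t v = k}" by metis
  define \<psi> where "\<psi> u = H (s u) u" for u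
  have A: "\<psi> u \<in> W \<and> t (\<psi> u) = s u" if "u \<in> U" for u
    using bij_betwE[OF H[of "s u"]] that unfolding \<psi>_def by blast
  have "inj_on \<psi> U"
  proof (rule inj_onI)
    fix u1 u2 assume u: "u1 \<in> U" "u2 \<in> U" "\<psi> u1 = \<psi> u2"
    then have "s u1 = s u2" using A by metis
    then show "u1 = u2" using u bij_betw_imp_inj_on[OF H[of "s u1"]] unfolding \<psi>_def
      by (simp add: inj_on_def)
  qed
  moreover have "\<psi> ` U = W"
  proof
    show "\<psi> ` U \<subseteq> W" using A by blast
    show "W \<subseteq> \<psi> ` U"
    proof
      fix v assume v: "v \<in> W"
      then have "v \<in> H (t v) ` {u\<in>U. s u = t v}"
        using bij_betw_imp_surj_on[OF H[of "t v"]] by blast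
      then obtain u where "u \<in> U" "s u = t v" "v = H (t v) u" by blast
      then show "v \<in> \<psi> ` U" unfolding \<psi>_def by force
    qed
  qed
  ultimately show ?thesis using A unfolding bij_betw_def by blast
qed


theorem theorem4:
  fixes Vq :: "'a set" and Eq :: "'a set set" and Lq :: "'a \<Rightarrow> 'l"
    and VH :: "'b set" and EH :: "'b set set" and LH :: "'b \<Rightarrow> 'l"
    and pos :: "'a set \<Rightarrow> nat" and E' :: "'a set set" and M :: "'a set \<Rightarrow> 'b set"
    and e :: "'a set" and f :: "'b set"
  assumes "hypergraph Vq Eq Lq" and "hypergraph VH EH LH"
    and "inj_on pos Eq" and "pos ` Eq \<subseteq> {..<card Eq}"
    and "E' \<subseteq> Eq"
    and "partial_embedding E' Lq EH LH M"
    and "e \<in> Eq - E'" and "f \<in> EH"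
    and "\<forall>(b::nat) l. bit b (pos e) \<longrightarrow>
           cell_q pos (insert e E') Lq b l = cell_H pos (insert e E') (M(e := f)) LH b l"
  shows "partial_embedding (insert e E') Lq EH LH (M(e := f))"
proof -
  define F where "F = insert e E'"
  define M' where "M' = M(e := f)"
  define U where "U = \<Union>F"
  define W where "W = \<Union>(M' ` F)"
  define sq where "sq u = ({g\<in>F. u \<in> g}, Lq u)" for u
  define sd where "sd v = ({g\<in>F. v \<in> M' g}, LH v)" for v
  have ME: "\<forall>g\<in>E'. M g \<in> EH" using assms(6) unfolding partial_embedding_def by blast
  obtain \<phi> where phi: "inj_on \<phi> (\<Union>E')" "\<forall>u\<in>\<Union>E'. LH (\<phi> u) = Lq u" "\<forall>g\<in>E'. \<phi> ` g = M g"
    using assms(6) unfolding partial_embedding_def by blast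
  have eE: "e \<in> Eq" "e \<notin> E'" using assms(7) by auto
  have FE: "F \<subseteq> Eq" using assms(5) eE unfolding F_def by blast
  have finEq: "finite Eq" using assms(1) unfolding hypergraph_def by (metis finite_UnionD)
  have finF: "finite F" using FE finEq finite_subset by blast
  have injF: "inj_on pos F" using inj_on_subset[OF assms(3) FE] .
  have eF: "e \<in> F" unfolding F_def by simp
  have M'E: "\<forall>g\<in>F. M' g \<in> EH" using ME assms(8) unfolding M'_def F_def by auto
  have M'E': "\<And>g. g \<in> E' \<Longrightarrow> M' g = M g" using eE unfolding M'_def by auto
  have M'e: "M' e = f" unfolding M'_def by simp
  have finU: "finite U" using assms(1) FE unfolding U_def hypergraph_def
    by (metis Union_mono finite_subset)
  have finW: "finite W"
  proof -
    have "W \<subseteq> \<Union>EH" using M'E unfolding W_def by blast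
    then show ?thesis using assms(2) unfolding hypergraph_def by (metis finite_subset)
  qed
  have bq: "bitmap_q pos F u = (\<Sum>g\<in>{g\<in>F. u \<in> g}. 2 ^ pos g)" for u
    unfolding bitmap_q_def ..
  have bH: "bitmap_H pos F M' v = (\<Sum>g\<in>{g\<in>F. v \<in> M' g}. 2 ^ pos g)" for v
    unfolding bitmap_H_def ..
  have case_e: "card {u\<in>U. sq u = (S, l)} = card {v\<in>W. sd v = (S, l)}"
    if S: "S \<subseteq> F" "e \<in> S" for S l
  proof -
    let ?b = "\<Sum>g\<in>S. (2::nat) ^ pos g"
    have "bit ?b (pos e)" using enc_bit[OF injF finF S(1) eF] S(2) by simp
    then have c: "cell_q pos F Lq ?b l = cell_H pos F M' LH ?b l"
      using assms(9) unfolding F_def M'_def by blast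
    have "{u \<in> \<Union>F. bitmap_q pos F u = ?b \<and> Lq u = l} = {u\<in>U. sq u = (S, l)}"
      unfolding U_def sq_def bq using enc_eq[OF injF finF _ S(1), of "{g\<in>F. _ \<in> g}"] by auto
    moreover have "{v \<in> \<Union>(M' ` F). bitmap_H pos F M' v = ?b \<and> LH v = l} = {v\<in>W. sd v = (S, l)}"
      unfolding W_def sd_def bH using enc_eq[OF injF finF _ S(1), of "{g\<in>F. _ \<in> M' g}"] by auto
    ultimately show ?thesis using c unfolding cell_q_def cell_H_def by simp
  qed
  have cards: "card {u\<in>U. sq u = k} = card {v\<in>W. sd v = k}" for k
  proof (cases k)
    case (Pair S l)
    show ?thesis
    proof (cases "S \<subseteq> F \<and> S \<noteq> {}")
      case False
      then have "{u\<in>U. sq u = k} = {}" "{v\<in>W. sd v = k} = {}"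
        unfolding Pair U_def W_def sq_def sd_def by auto
      then show ?thesis by (simp only: card.empty)
    next
      case True
      show ?thesis
      proof (cases "e \<in> S")
        case True
        then show ?thesis using case_e \<open>S \<subseteq> F \<and> S \<noteq> {}\<close> Pair by blast
      next
        case False
        have SE: "S \<subseteq> E'" "S \<noteq> {}" using True False unfolding F_def by auto
        define A where "A = {u\<in>\<Union>E'. {g\<in>E'. u \<in> g} = S \<and> Lq u = l}"
        define B where "B = {v\<in>\<Union>(M ` E'). {g\<in>E'. v \<in> M g} = S \<and> LH v = l}"
        have "A \<subseteq> U" unfolding A_def U_def F_def by auto
        then have finA: "finite A" using finU finite_subset by blast
        have "B \<subseteq> W" using M'E' unfolding B_def W_def F_def by force
        then have finB: "finite B" using finW finite_subset by blast
        have Q: "{u\<in>U. sq u = k} = A - e"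
          using SE False unfolding Pair A_def U_def sq_def F_def by auto
        have Qe: "{u\<in>U. sq u = (insert e S, l)} = A \<inter> e"
          using SE False eE unfolding A_def U_def sq_def F_def by auto
        have D: "{v\<in>W. sd v = k} = B - f"
          using SE False M'E' M'e unfolding Pair B_def W_def sd_def F_def by auto
        have sigF1: "{g\<in>F. v \<in> M' g} = insert e {g\<in>E'. v \<in> M g}" if "v \<in> f" for v
        proof -
          have "{g\<in>F. v \<in> M' g} = insert e {g\<in>E'. v \<in> M' g}" using that M'e unfolding F_def by blast
          also have "{g\<in>E'. v \<in> M' g} = {g\<in>E'. v \<in> M g}" using M'E' by blast
          finally show ?thesis .
        qed
        have sigF2: "{g\<in>F. v \<in> M' g} = {g\<in>E'. v \<in> M g}" if "v \<notin> f" for v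
        proof -
          have "{g\<in>F. v \<in> M' g} = {g\<in>E'. v \<in> M' g}" using that M'e unfolding F_def by blast
          also have "{g\<in>E'. v \<in> M' g} = {g\<in>E'. v \<in> M g}" using M'E' by blast
          finally show ?thesis .
        qed
        have eS: "e \<notin> {g\<in>E'. v \<in> M g}" for v using eE by blast
        have De: "{v\<in>W. sd v = (insert e S, l)} = B \<inter> f"
        proof (intro set_eqI iffI)
          fix v assume v: "v \<in> {v\<in>W. sd v = (insert e S, l)}"
          then have sv: "{g\<in>F. v \<in> M' g} = insert e S" "LH v = l" unfolding sd_def by simp_all
          have vf: "v \<in> f"
          proof (rule ccontr)
            assume "v \<notin> f"
            then have "e \<notin> {g\<in>F. v \<in> M' g}" using sigF2 eS by metis
            then show False using sv(1) by blast
          qed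
          have "insert e {g\<in>E'. v \<in> M g} = insert e S" using sv(1) sigF1[OF vf] by simp
          then have "{g\<in>E'. v \<in> M g} = S" using insert_ident[OF eS[of v] False] by simp
          moreover obtain g where "g \<in> S" using SE by blast
          ultimately have "v \<in> \<Union>(M ` E')" using SE by auto
          then show "v \<in> B \<inter> f" using vf sv(2) \<open>{g\<in>E'. v \<in> M g} = S\<close> unfolding B_def by blast
        next
          fix v assume v: "v \<in> B \<inter> f"
          then have "v \<in> W" using M'e eF unfolding W_def by blast
          moreover have "{g\<in>F. v \<in> M' g} = insert e S" using v sigF1[of v] unfolding B_def by simp
          moreover have "LH v = l" using v unfolding B_def by simp
          ultimately show "v \<in> {v\<in>W. sd v = (insert e S, l)}" unfolding sd_def by simp
        qed
        have ce: "card (A \<inter> e) = card (B \<inter> f)"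
          using case_e[of "insert e S" l] SE eF Qe De unfolding F_def by auto
        have mem: "\<phi> u \<in> M g \<longleftrightarrow> u \<in> g" if "u \<in> \<Union>E'" "g \<in> E'" for u g
        proof -
          have "\<phi> u \<in> \<phi> ` g \<longleftrightarrow> u \<in> g"
            using inj_on_image_mem_iff[OF phi(1) that(1)] that(2) by blast
          then show ?thesis using phi(3) that(2) by blast
        qed
        have BA: "B = \<phi> ` A"
        proof
          show "\<phi> ` A \<subseteq> B"
          proof
            fix v assume "v \<in> \<phi> ` A"
            then obtain u where u: "u \<in> A" "v = \<phi> u" by blast
            then have "u \<in> \<Union>E'" unfolding A_def by blast
            then show "v \<in> B" using u mem phi(2) phi(3) unfolding A_def B_def by auto
          qed
          show "B \<subseteq> \<phi> ` A"
          proof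
            fix v assume v: "v \<in> B"
            then obtain g where g: "g \<in> E'" "v \<in> M g" unfolding B_def by blast
            then obtain u where u: "u \<in> g" "v = \<phi> u" using phi(3) by blast
            have uU: "u \<in> \<Union>E'" using u g by blast
            have "u \<in> A" using v u uU mem phi(2) unfolding A_def B_def by auto
            then show "v \<in> \<phi> ` A" using u by blast
          qed
        qed
        have "card B = card A" unfolding BA
          by (rule card_image, rule inj_on_subset[OF phi(1)]) (auto simp: A_def)
        then show ?thesis unfolding Q D
          using card_Diff_subset_Int[of A e] card_Diff_subset_Int[of B f] finA finB ce by simp
      qed
    qed
  qed
  obtain \<psi> where psi: "bij_betw \<psi> U W" "\<forall>u\<in>U. sd (\<psi> u) = sq u"
    using fiber_bij[OF finU finW cards] by blast
  have "inj_on \<psi> (\<Union>F)" using psi(1) unfolding bij_betw_def U_def by blast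
  moreover have "\<forall>u\<in>\<Union>F. LH (\<psi> u) = Lq u" using psi(2) unfolding U_def sq_def sd_def by auto
  moreover have "\<forall>g\<in>F. \<psi> ` g = M' g"
  proof
    fix g assume g: "g \<in> F"
    show "\<psi> ` g = M' g"
    proof
      show "\<psi> ` g \<subseteq> M' g"
      proof
        fix v assume "v \<in> \<psi> ` g"
        then obtain u where u: "u \<in> g" "v = \<psi> u" by blast
        then have "u \<in> U" using g unfolding U_def by blast
        then have "sd (\<psi> u) = sq u" using psi(2) by blast
        then show "v \<in> M' g" using u g unfolding sd_def sq_def by blast
      qed
      show "M' g \<subseteq> \<psi> ` g"
      proof
        fix v assume v: "v \<in> M' g"
        then have "v \<in> W" using g unfolding W_def by blast
        then obtain u where u: "u \<in> U" "v = \<psi> u" using bij_betw_imp_surj_on[OF psi(1)] by blast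
        then have "sd (\<psi> u) = sq u" using psi(2) by blast
        then have "u \<in> g" using u v g unfolding sd_def sq_def by blast
        then show "v \<in> \<psi> ` g" using u by blast
      qed
    qed
  qed
  ultimately show ?thesis using M'E unfolding partial_embedding_def F_def M'_def by blast
qed

end
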